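(* If $(x,y)$ and $(x,y')$ are both $\mathbf{x}$-vertices of $S$, then $d_S((x,y),(x,y'))\le d(\bar B)$.
   Context: Let $A\in\mathbb{R}^{m_1\times n_1}$, $a_1,a_2\in\mathbb{R}^{1\times n_1}$, $b_1,b_2\in\mathbb{R}^{1\times n_2}$, $B\in\mathbb{R}^{m_2\times n_2}$, $c_A\in\mathbb{R}^{m_1}$, $c_B\in\mathbb{R}^{m_2}$, and scalars $c_a^1,c_a^2,c_b^1,c_b^2$. Consider the ($3$-sum) polyhedron $S=\{(x,y)\in\mathbb{R}^{n_1}\times\mathbb{R}^{n_2}: Ax=c_A,\ a_1x+b_1y=c_a^1+c_b^1,\ a_2x+b_2y=c_a^2+c_b^2,\ By=c_B,\ x,y\ge 0\}$, assumed simple (nondegenerate). Let $P_A=\{x: Ax=c_A, x\ge 0\}$ and $\bar B=\begin{bmatrix}b_1\\ b_2\\ B\end{bmatrix}$. A vertex $(x,y)$ of $S$ is an $\mathbf{x}$-vertex if $x$ is a vertex of $P_A$. $d_S(v,w)$ is the minimum number of edges of an edge walk in $S$ from $v$ to $w$. For a polyhedron $P$, $d(P)$ is its combinatorial diameter, and for a matrix $M\in\mathbb{R}^{m\times n}$, $d(M):=\max\{d(\{z: Mz=r, z\ge 0\}): r\in\mathbb{R}^m\}$. *)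

theory Defs
  imports "HOL-Analysis.Analysis" "HOL-Library.Extended_Nat"
begin

definition poly_vertex :: "'a::real_vector set \<Rightarrow> 'a \<Rightarrow> bool" where
  "poly_vertex P v \<longleftrightarrow> v extreme_point_of P"

definition poly_adjacent :: "'a::real_vector set \<Rightarrow> 'a \<Rightarrow> 'a \<Rightarrow> bool" where
  "poly_adjacent P v w \<longleftrightarrow> poly_vertex P v \<and> poly_vertex P w \<and> v \<noteq> w
     \<and> closed_segment v w face_of P"

definition edge_walk :: "'a::real_vector set \<Rightarrow> 'a \<Rightarrow> 'a \<Rightarrow> nat \<Rightarrow> bool" where
  "edge_walk P v w k \<longleftrightarrow> (\<exists>p :: nat \<Rightarrow> 'a. p 0 = v \<and> p k = w \<and>
      (\<forall>i<k. poly_adjacent P (p i) (p (Suc i))))"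

text \<open>d_P(v,w): minimum number of edges of an edge walk (infinity if none).\<close>
definition edge_dist :: "'a::real_vector set \<Rightarrow> 'a \<Rightarrow> 'a \<Rightarrow> enat" where
  "edge_dist P v w = (INF k \<in> {k. edge_walk P v w k}. enat k)"

definition comb_diam :: "'a::real_vector set \<Rightarrow> enat" where
  "comb_diam P = (SUP vw \<in> {(v, w). poly_vertex P v \<and> poly_vertex P w}. edge_dist P (fst vw) (snd vw))"

definition std_poly :: "real^'n^'m \<Rightarrow> real^'m \<Rightarrow> (real^'n) set" where
  "std_poly M r = {z. M *v z = r \<and> (\<forall>i. 0 \<le> z $ i)}"

definition matrix_diam :: "real^'n^'m \<Rightarrow> enat" where
  "matrix_diam M = (SUP r \<in> UNIV. comb_diam (std_poly M r))"

definition simple_polyhedron :: "'a::euclidean_space set \<Rightarrow> bool" where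
  "simple_polyhedron P \<longleftrightarrow> polyhedron P \<and>
     (\<forall>v. poly_vertex P v \<longrightarrow> int (card {F. F facet_of P \<and> v \<in> F}) = aff_dim P)"

definition three_sum :: "real^'n1^'m1 \<Rightarrow> real^'n1 \<Rightarrow> real^'n1 \<Rightarrow> real^'n2 \<Rightarrow> real^'n2
    \<Rightarrow> real^'n2^'m2 \<Rightarrow> real^'m1 \<Rightarrow> real^'m2 \<Rightarrow> real \<Rightarrow> real \<Rightarrow> real \<Rightarrow> real
    \<Rightarrow> ((real^'n1) \<times> (real^'n2)) set" where
  "three_sum A a1 a2 b1 b2 B cA cB ca1 ca2 cb1 cb2 =
    {(x, y). A *v x = cA \<and> a1 \<bullet> x + b1 \<bullet> y = ca1 + cb1 \<and> a2 \<bullet> x + b2 \<bullet> y = ca2 + cb2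
       \<and> B *v y = cB \<and> (\<forall>i. 0 \<le> x $ i) \<and> (\<forall>j. 0 \<le> y $ j)}"

definition Bbar :: "real^'n2 \<Rightarrow> real^'n2 \<Rightarrow> real^'n2^'m2 \<Rightarrow> real^'n2^(bool + 'm2)" where
  "Bbar b1 b2 B = (\<chi> i. case i of Inl True \<Rightarrow> b1 | Inl False \<Rightarrow> b2 | Inr j \<Rightarrow> B $ j)"

definition x_vertex :: "((real^'n1) \<times> (real^'n2)) set \<Rightarrow> (real^'n1) set \<Rightarrow> (real^'n1) \<times> (real^'n2) \<Rightarrow> bool" where
  "x_vertex S PA v \<longleftrightarrow> poly_vertex S v \<and> poly_vertex PA (fst v)"

end

theory Submission imports Defs begin

lemma pair_face_iff:
  fixes x :: "'a::real_vector" and T S :: "'b::real_vector set"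
  shows "((\<lambda>y. (x,y)) ` T face_of (\<lambda>y. (x,y)) ` S) \<longleftrightarrow> T face_of S"
proof -
  have e: "\<And>U::'b set. (\<lambda>y. (x,y)) ` U = (+) (x,0) ` ((\<lambda>y. (0::'a,y)) ` U)"
    by (simp add: image_image)
  have lin: "linear (\<lambda>y. (0::'a,y))"
    by (simp add: linear_iff)
  have inj: "inj (\<lambda>y. (0::'a,y))" by (auto simp: inj_on_def)
  show ?thesis unfolding e face_of_translation_eq face_of_linear_image[OF lin inj] ..
qed

lemma slice_face:
  fixes S :: "('a::real_vector \<times> 'b::real_vector) set"
  assumes ext: "x extreme_point_of P" and sub: "\<And>p. p \<in> S \<Longrightarrow> fst p \<in> P" and cvx: "convex S"
  shows "{p\<in>S. fst p = x} face_of S"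
proof -
  have c: "convex {p \<in> S. fst p = x}"
    using cvx unfolding convex_def by (auto simp: algebra_simps)
       (metis scaleR_add_left scaleR_one)
  have key: "a \<in> {p \<in> S. fst p = x} \<and> b \<in> {p \<in> S. fst p = x}"
    if a: "a \<in> S" and b: "b \<in> S" and z: "z \<in> {p \<in> S. fst p = x}"
    and zs: "z \<in> open_segment a b" for a b z
  proof -
  obtain u where u: "0 < u" "u < 1" "z = (1 - u) *\<^sub>R a + u *\<^sub>R b"
    using zs by (auto simp: in_segment)
  have "fst a = fst b"
  proof (rule ccontr)
    assume ne: "fst a \<noteq> fst b"
    have "fst z = (1 - u) *\<^sub>R fst a + u *\<^sub>R fst b" using u by simp
    then have "x \<in> open_segment (fst a) (fst b)" using ne u z by (auto simp: in_segment)
    then show False using ext sub[OF a] sub[OF b] by (auto simp: extreme_point_of_def)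
  qed
  have "fst z = (1 - u) *\<^sub>R fst a + u *\<^sub>R fst a" using u(3) \<open>fst a = fst b\<close> by simp
  also have "\<dots> = fst a" by (simp flip: scaleR_add_left)
  finally have "fst z = fst a" .
  then show ?thesis
    using a b z \<open>fst a = fst b\<close> by auto
  qed
  show ?thesis unfolding face_of_def using c key by blast
qed


lemma Bbar_mult:
  "(Bbar b1 b2 B *v y = r) \<longleftrightarrow> b1 \<bullet> y = r $ Inl True \<and> b2 \<bullet> y = r $ Inl False \<and> (\<forall>j. (B *v y) $ j = r $ Inr j)"
  unfolding vec_eq_iff split_sum_all all_bool_eq
  by (simp add: Bbar_def matrix_vector_mult_def inner_vec_def mult.commute)

lemma pair_segment: "closed_segment (x,u) (x,v) = Pair x ` closed_segment u v"
  by (auto simp: in_segment image_iff algebra_simps simp flip: scaleR_add_left)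

theorem lemma7:
  fixes A :: "real^'n1^'m1" and a1 a2 :: "real^'n1" and b1 b2 :: "real^'n2"
    and B :: "real^'n2^'m2" and cA :: "real^'m1" and cB :: "real^'m2"
    and ca1 ca2 cb1 cb2 :: real and x :: "real^'n1" and y y' :: "real^'n2"
  assumes "simple_polyhedron (three_sum A a1 a2 b1 b2 B cA cB ca1 ca2 cb1 cb2)"
    and "x_vertex (three_sum A a1 a2 b1 b2 B cA cB ca1 ca2 cb1 cb2) (std_poly A cA) (x, y)"
    and "x_vertex (three_sum A a1 a2 b1 b2 B cA cB ca1 ca2 cb1 cb2) (std_poly A cA) (x, y')"
  shows "edge_dist (three_sum A a1 a2 b1 b2 B cA cB ca1 ca2 cb1 cb2) (x, y) (x, y')
           \<le> matrix_diam (Bbar b1 b2 B)"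
proof -
  define S where "S = three_sum A a1 a2 b1 b2 B cA cB ca1 ca2 cb1 cb2"
  define r :: "real^(bool+'m2)" where "r = (\<chi> i. case i of Inl True \<Rightarrow> ca1 + cb1 - a1 \<bullet> x
      | Inl False \<Rightarrow> ca2 + cb2 - a2 \<bullet> x | Inr j \<Rightarrow> cB $ j)"
  define Q where "Q = std_poly (Bbar b1 b2 B) r"
  have hx: "x extreme_point_of std_poly A cA"
    using assms(2) by (simp add: x_vertex_def poly_vertex_def)
  have hxP: "x \<in> std_poly A cA" using hx by (simp add: extreme_point_of_def)
  have sub: "fst p \<in> std_poly A cA" if "p \<in> S" for p
    using that by (auto simp: S_def three_sum_def std_poly_def)
  have cvx: "convex S"
    using assms(1) unfolding S_def simple_polyhedron_def by (simp add: polyhedron_imp_convex)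
  have SQ: "{p\<in>S. fst p = x} = Pair x ` Q"
  proof (rule set_eqI, rule iffI)
    fix p assume "p \<in> {p\<in>S. fst p = x}"
    then obtain b where pb: "p = (x,b)" "(x,b) \<in> S" by (cases p) auto
    have "b \<in> Q" using pb(2)
      unfolding S_def three_sum_def Q_def std_poly_def Bbar_mult
      by (auto simp: r_def algebra_simps)
    then show "p \<in> Pair x ` Q" using pb by auto
  next
    fix p assume "p \<in> Pair x ` Q"
    then obtain b where pb: "p = (x,b)" "b \<in> Q" by auto
    have "(x,b) \<in> S" using pb(2) hxP
      unfolding S_def three_sum_def Q_def std_poly_def Bbar_mult
      by (auto simp: r_def algebra_simps vec_eq_iff)
    then show "p \<in> {p\<in>S. fst p = x}" using pb by auto
  qed
  have F: "Pair x ` Q face_of S"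
    using slice_face[OF hx sub cvx] SQ by simp
  have vQ: "poly_vertex Q u" if "poly_vertex S (x,u)" for u
  proof -
    have "{(x,u)} face_of S" using that by (simp add: poly_vertex_def face_of_singleton)
    moreover have "(x,u) \<in> Pair x ` Q" 
    proof -
      have "(x,u) \<in> S" using that by (simp add: poly_vertex_def extreme_point_of_def)
      then have "(x,u) \<in> {p\<in>S. fst p = x}" by simp
      then show ?thesis using SQ by simp
    qed
    ultimately have "Pair x ` {u} face_of Pair x ` Q" using face_of_face[OF F] by simp
    then have "{u} face_of Q" using pair_face_iff[of x "{u}" Q] by blast
    then show ?thesis by (simp add: poly_vertex_def face_of_singleton)
  qed
  have vS: "poly_vertex S (x,u)" if "poly_vertex Q u" for u
  proof -
    have "{u} face_of Q" using that by (simp add: poly_vertex_def face_of_singleton)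
    then have "Pair x ` {u} face_of Pair x ` Q" using pair_face_iff by blast
    then have "{(x,u)} face_of S" using face_of_trans[OF _ F] by simp
    then show ?thesis by (simp add: poly_vertex_def face_of_singleton)
  qed
  have adj: "poly_adjacent S (x,u) (x,v)" if "poly_adjacent Q u v" for u v
  proof -
    have "closed_segment u v face_of Q" using that by (simp add: poly_adjacent_def)
    then have "Pair x ` closed_segment u v face_of Pair x ` Q" using pair_face_iff by blast
    then have "closed_segment (x,u) (x,v) face_of S" using face_of_trans[OF _ F] pair_segment by metis
    then show ?thesis using that vS by (simp add: poly_adjacent_def)
  qed
  have walk: "edge_walk S (x,y) (x,y') k" if w: "edge_walk Q y y' k" for k
  proof -
    obtain p where p: "p 0 = y" "p k = y'" "\<forall>i<k. poly_adjacent Q (p i) (p (Suc i))"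
      using w unfolding edge_walk_def by blast
    show ?thesis unfolding edge_walk_def
      by (rule exI[of _ "\<lambda>i. (x, p i)"]) (use p adj in auto)
  qed
  have "edge_dist S (x,y) (x,y') \<le> edge_dist Q y y'"
    unfolding edge_dist_def by (rule INF_superset_mono) (use walk in auto)
  also have "\<dots> \<le> comb_diam Q"
  proof -
    have "poly_vertex Q y" "poly_vertex Q y'" using assms(2,3) vQ by (auto simp: S_def x_vertex_def)
    then show ?thesis unfolding comb_diam_def by (intro SUP_upper2[of "(y,y')"]) auto
  qed
  also have "\<dots> \<le> matrix_diam (Bbar b1 b2 B)"
    unfolding matrix_diam_def Q_def by (rule SUP_upper) simp
  finally show ?thesis by (simp add: S_def)
qed

end
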